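(* Let $N\in\mathbb N_0$, $0<\pi_1,\dots,\pi_p<1$ pairwise distinct, $\vec n\in\mathbb N_0^p$ with $|\vec n|\le N$. Let $\mathcal C^*$ be a positively oriented (counterclockwise) simple closed contour enclosing the origin exactly once. Then for $x\in\{0,\dots,N\}$ $$K^{(\mathrm{II})}_{\vec n}(x;\vec\pi,N)=\frac{\prod_{j=1}^p(1-\pi_j)^{n_j}}{(N-|\vec n|)!}\Gamma(x+1)\Gamma(N-x+1)\int_{\mathcal C^*}\frac{(1+s)^{N-|\vec n|}}{s^{x+1}}\prod_{j=1}^p\Big(s-\frac{\pi_j}{1-\pi_j}\Big)^{n_j}\frac{ds}{2\pi i}.$$
   Context: Kravchuk weights $w_i(x)=\binom Nx\pi_i^x(1-\pi_i)^{N-x}$ on $\{0,\dots,N\}$. $K^{(\mathrm{II})}_{\vec n}$ is the monic polynomial of degree $|\vec n|$ with $\sum_{k=0}^Nk^jK^{(\mathrm{II})}_{\vec n}(k)w_i(k)=0$ for $0\le j\le n_i-1$, $1\le i\le p$. *)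

theory Defs
  imports "HOL-Complex_Analysis.Complex_Analysis" "HOL-Computational_Algebra.Polynomial"
begin

definition kravchuk_weight :: "nat \<Rightarrow> real \<Rightarrow> nat \<Rightarrow> real" where
  "kravchuk_weight N pr x = real (N choose x) * pr ^ x * (1 - pr) ^ (N - x)"

definition is_kravchuk_II :: "nat \<Rightarrow> (nat \<Rightarrow> real) \<Rightarrow> nat \<Rightarrow> (nat \<Rightarrow> nat) \<Rightarrow> real poly \<Rightarrow> bool" where
  "is_kravchuk_II p pr N n P \<longleftrightarrow>
     degree P = (\<Sum>i<p. n i) \<and> lead_coeff P = 1 \<and>
     (\<forall>i<p. \<forall>j<n i. (\<Sum>k=0..N. real k ^ j * poly P (real k) * kravchuk_weight N (pr i) k) = 0)"

definition kravchuk_II :: "nat \<Rightarrow> (nat \<Rightarrow> real) \<Rightarrow> nat \<Rightarrow> (nat \<Rightarrow> nat) \<Rightarrow> real poly" where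
  "kravchuk_II p pr N n = (THE P. is_kravchuk_II p pr N n P)"

end

theory Submission
  imports Defs
begin


lemma contour_monomial:
  fixes g :: "real \<Rightarrow> complex"
  assumes g: "valid_path g" "pathfinish g = pathstart g" "0 \<notin> path_image g"
  shows "((\<lambda>s. s^k / s^(x+1)) has_contour_integral
           (if k = x then 2*pi*\<i>*winding_number g 0 else 0)) g"
proof (cases "k = x")
  case True
  have "((\<lambda>w. 1/(w - 0)) has_contour_integral (2*pi*\<i>*winding_number g 0)) g"
    by (rule has_contour_integral_winding_number) (use g in auto)
  then show ?thesis using True g(3)
    by (auto intro: has_contour_integral_eq)
next
  case False
  define e where "e = int k - int x"
  have e0: "e \<noteq> 0" using False by (simp add: e_def)
  have "((\<lambda>s. s powi (e - 1)) has_contour_integral 0) g"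
  proof (rule Cauchy_theorem_primitive[where S="-{0}" and f="\<lambda>s. s powi e / of_int e"])
    fix s :: complex assume "s \<in> -{0}"
    then have "s \<noteq> 0" by auto
    then show "((\<lambda>s. s powi e / of_int e) has_field_derivative s powi (e - 1)) (at s within -{0})"
      using e0 by (auto intro!: derivative_eq_intros)
  qed (use g in auto)
  then have "((\<lambda>s. s^k / s^(x+1)) has_contour_integral 0) g"
  proof (rule has_contour_integral_eq)
    fix s assume "s \<in> path_image g"
    then have s: "s \<noteq> 0" using g(3) by auto
    have "s powi (e - 1) = s powi (int k - int (x+1))" by (simp add: e_def algebra_simps)
    also have "\<dots> = s powi int k / s powi int (x+1)" using s by (simp add: power_int_diff)
    also have "\<dots> = s^k / s^(x+1)" by (simp only: power_int_of_nat)
    finally show "s powi (e - 1) = s^k / s^(x+1)" .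
  qed
  then show ?thesis using False by simp
qed

lemma contour_poly:
  fixes g :: "real \<Rightarrow> complex" and Q :: "complex poly"
  assumes g: "valid_path g" "pathfinish g = pathstart g" "0 \<notin> path_image g"
  shows "contour_integral g (\<lambda>s. poly Q s / s^(x+1)) = 2*pi*\<i>*winding_number g 0 * coeff Q x"
proof -
  have "((\<lambda>s. \<Sum>k\<le>degree Q. coeff Q k * (s^k / s^(x+1))) has_contour_integral
          (\<Sum>k\<le>degree Q. coeff Q k * (if k = x then 2*pi*\<i>*winding_number g 0 else 0))) g"
    by (intro has_contour_integral_sum has_contour_integral_lmul contour_monomial g) auto
  moreover have "(\<Sum>k\<le>degree Q. coeff Q k * (if k = x then 2*pi*\<i>*winding_number g 0 else 0))
      = 2*pi*\<i>*winding_number g 0 * coeff Q x"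
    by (auto simp: if_distrib sum.delta coeff_eq_0 cong: if_cong)
  moreover have "(\<lambda>s. \<Sum>k\<le>degree Q. coeff Q k * (s^k / s^(x+1))) = (\<lambda>s. poly Q s / s^(x+1))"
    by (auto simp: poly_altdef sum_divide_distrib)
  ultimately show ?thesis by (metis contour_integral_unique)
qed


definition theta :: "real poly \<Rightarrow> real poly" where "theta P = pCons 0 (pderiv P)"

lemma coeff_theta: "coeff (theta P) k = real k * coeff P k"
  by (cases k) (auto simp: theta_def coeff_pCons coeff_pderiv)

lemma coeff_theta_pow: "coeff ((theta ^^ j) P) k = real k ^ j * coeff P k"
  by (induction j) (auto simp: coeff_theta)

lemma theta_smult: "(theta ^^ j) (smult c P) = smult c ((theta ^^ j) P)"
  by (rule poly_eqI) (simp add: coeff_theta_pow)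

lemma theta_pow_order:
  assumes "j \<le> m"
  shows "\<exists>K c. (theta ^^ j) ([:-a,1:]^m * H) = [:-a,1:]^(m-j) * K \<and> poly K a = c * poly H a
            \<and> (a \<noteq> 0 \<longrightarrow> c \<noteq> 0)"
  using assms
proof (induction j)
  case 0
  then show ?case by (intro exI[of _ H] exI[of _ 1]) auto
next
  case (Suc j)
  then obtain K c where K: "(theta ^^ j) ([:-a,1:]^m * H) = [:-a,1:]^(m-j) * K"
     "poly K a = c * poly H a" "a \<noteq> 0 \<longrightarrow> c \<noteq> 0" by auto
  obtain t where t: "m - j = Suc t" using Suc.prems by (metis Suc_diff_Suc Suc_le_lessD)
  have mt: "m - Suc j = t" using t by simp
  define K' where "K' = [:0,1:] * (smult (of_nat (Suc t)) K + [:-a,1:] * pderiv K)"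
  have "(theta ^^ Suc j) ([:-a,1:]^m * H) = theta ([:-a,1:]^Suc t * K)" using K t by simp
  also have "\<dots> = [:-a,1:]^t * K'"
    unfolding theta_def K'_def pderiv_mult pderiv_power_Suc
    by (simp add: pderiv_pCons algebra_simps)
  finally show ?case
    using K unfolding mt
    by (intro exI[of _ K'] exI[of _ "a * of_nat (Suc t) * c"]) (auto simp: K'_def)
qed

lemma theta_pow_vanish:
  assumes "j < m"
  shows "poly ((theta ^^ j) ([:-a,1:]^m * H)) a = 0"
proof -
  obtain K c where "(theta ^^ j) ([:-a,1:]^m * H) = [:-a,1:]^(m-j) * K"
    using theta_pow_order[of j m a H] assms by auto
  then show ?thesis using assms by (simp add: zero_less_diff)
qed

lemma theta_pow_dvd:
  assumes "j \<le> m"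
  shows "[:-a,1:]^(m-j) dvd (theta ^^ j) ([:-a,1:]^m * H)"
proof -
  obtain K c where "(theta ^^ j) ([:-a,1:]^m * H) = [:-a,1:]^(m-j) * K"
    using theta_pow_order[of j m a H] assms by auto
  then show ?thesis by simp
qed

lemma theta_converse:
  assumes "a \<noteq> 0" "\<And>j. j < n \<Longrightarrow> poly ((theta ^^ j) G) a = 0"
  shows "[:-a,1:]^n dvd G"
  using assms(2)
proof (induction n)
  case 0
  then show ?case by simp
next
  case (Suc n)
  then have "[:-a,1:]^n dvd G" by auto
  then obtain H where H: "G = [:-a,1:]^n * H" by (auto elim: dvdE)
  obtain K c where K: "(theta ^^ n) ([:-a,1:]^n * H) = [:-a,1:]^(n-n) * K"
     "poly K a = c * poly H a" "c \<noteq> 0"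
    using theta_pow_order[of n n a H] assms(1) by auto
  have "poly ((theta ^^ n) G) a = 0" using Suc.prems by auto
  then have "poly H a = 0" using K H by simp
  then have "[:-a,1:] dvd H" by (simp add: poly_eq_0_iff_dvd)
  then show ?case unfolding H power_Suc2 by (intro mult_dvd_mono) auto
qed



definition GR :: "nat \<Rightarrow> real poly \<Rightarrow> real poly" where
  "GR N R = (\<Sum>j\<le>degree R. smult (coeff R j) ((theta ^^ j) ([:1,1:]^N)))"

lemma coeff_binom_poly: "coeff ([:1::real,1:]^N) k = real (N choose k)"
proof (cases "k \<le> N")
  case True then show ?thesis by (simp add: coeff_linear_poly_power)
next
  case False
  then have "coeff ([:1::real,1:]^N) k = 0"
    by (intro coeff_eq_0) (simp add: degree_linear_power)
  then show ?thesis using False by simp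
qed

lemma coeff_GR: "coeff (GR N R) k = poly R (real k) * real (N choose k)"
  by (simp add: GR_def coeff_sum coeff_theta_pow coeff_binom_poly poly_altdef sum_distrib_left
       algebra_simps)

lemma poly_upto:
  assumes "degree Q \<le> D"
  shows "poly Q (u::real) = (\<Sum>k\<le>D. coeff Q k * u^k)"
proof -
  have "poly Q u = (\<Sum>k\<le>degree Q. coeff Q k * u^k)" by (rule poly_altdef)
  also have "\<dots> = (\<Sum>k\<le>D. coeff Q k * u^k)"
    by (rule sum.mono_neutral_left) (use assms in \<open>auto simp: coeff_eq_0\<close>)
  finally show ?thesis .
qed

lemma degree_GR: "degree ((theta ^^ j) (GR N R)) \<le> N"
  by (rule degree_le) (auto simp: coeff_theta_pow coeff_GR)

lemma ortho_eq:
  assumes "0 < q" "q < 1"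
  shows "(\<Sum>k=0..N. real k ^ j * poly R (real k) * kravchuk_weight N q k)
       = (1-q)^N * poly ((theta ^^ j) (GR N R)) (q/(1-q))"
proof -
  have "(1-q)^N * poly ((theta ^^ j) (GR N R)) (q/(1-q))
     = (\<Sum>k\<le>N. (1-q)^N * (real k ^ j * (poly R (real k) * real (N choose k))) * (q/(1-q))^k)"
    by (simp add: poly_upto[OF degree_GR] coeff_theta_pow coeff_GR sum_distrib_left mult.assoc)
  also have "\<dots> = (\<Sum>k=0..N. real k ^ j * poly R (real k) * kravchuk_weight N q k)"
  proof (unfold atLeast0AtMost, rule sum.cong[OF refl])
    fix k assume "k \<in> {..N}"
    then have kN: "k \<le> N" by auto
    have "(1-q)^N = (1-q)^k * (1-q)^(N-k)" using kN by (simp flip: power_add)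
    moreover have "(1-q)^k * (q/(1-q))^k = q^k" using assms by (simp flip: power_mult_distrib)
    ultimately show "(1-q)^N * (real k ^ j * (poly R (real k) * real (N choose k))) * (q/(1-q))^k
        = real k ^ j * poly R (real k) * kravchuk_weight N q k"
      unfolding kravchuk_weight_def by (simp add: algebra_simps)
  qed
  finally show ?thesis by simp
qed



lemma GR_diff: "GR N (P1 - P2) = GR N P1 - GR N P2"
  by (rule poly_eqI) (simp add: coeff_GR algebra_simps)

lemma GR_binom_dvd:
  assumes "degree R \<le> d" "d \<le> N"
  shows "[:1,1:]^(N - d) dvd GR N R"
  unfolding GR_def
proof (intro dvd_sum dvd_smult)
  fix j assume "j \<in> {..degree R}"
  then have j: "j \<le> d" using assms by auto
  have "[:-(-1),1:]^(N-j) dvd (theta ^^ j) ([:-(-1),1:]^N * 1)"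
    by (rule theta_pow_dvd) (use j assms in auto)
  moreover have "[:1::real,1:]^(N-d) dvd [:1,1:]^(N-j)"
    by (rule le_imp_power_dvd) (use j in auto)
  ultimately show "[:1,1:]^(N-d) dvd (theta ^^ j) ([:1,1:]^N)"
    by (auto intro: dvd_trans)
qed

lemma prod_roots_dvd:
  fixes a :: "nat \<Rightarrow> real"
  assumes "inj_on a {..<p}" "\<And>i. i < p \<Longrightarrow> a i \<noteq> b"
    and "\<And>i. i < p \<Longrightarrow> [:-a i,1:]^(n i) dvd G"
    and "[:-b,1:]^m dvd G" and "G \<noteq> 0"
  shows "(\<Prod>i<p. [:-a i,1:]^(n i)) * [:-b,1:]^m dvd G"
proof -
  have "q \<le> p \<Longrightarrow> (\<Prod>i<q. [:-a i,1:]^(n i)) * [:-b,1:]^m dvd G" for q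
  proof (induction q)
    case 0 then show ?case using assms(4) by simp
  next
    case (Suc q)
    define D where "D = (\<Prod>i<q. [:-a i,1:]^(n i)) * [:-b,1:]^m"
    from Suc have "D dvd G" by (simp add: D_def)
    then obtain H where H: "G = D * H" by (auto elim: dvdE)
    have q: "q < p" using Suc.prems by simp
    have ne: "a q \<noteq> a i" if "i < q" for i using inj_onD[OF assms(1), of q i] that q by auto
    have "poly D (a q) \<noteq> 0"
      using assms(2) q ne by (auto simp: D_def poly_prod)
    then have oD: "order (a q) D = 0" by (rule order_0I)
    have "n q \<le> order (a q) G"
      using assms(3)[OF q] assms(5) by (simp add: order_divides)
    also have "order (a q) G = order (a q) D + order (a q) H"
      using H assms(5) by (simp add: order_mult)
    finally have "[:-a q,1:]^(n q) dvd H"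
      using oD by (simp add: order_divides)
    then have "D * [:-a q,1:]^(n q) dvd D * H" by simp
    then show ?case using H by (simp add: D_def algebra_simps)
  qed
  then show ?thesis by simp
qed

lemma kr_unique:
  assumes pr: "\<forall>i<p. 0 < pr i \<and> pr i < 1" and inj: "inj_on pr {..<p}"
    and nN: "(\<Sum>i<p. n i) \<le> N"
    and P1: "is_kravchuk_II p pr N n P1" and P2: "is_kravchuk_II p pr N n P2"
  shows "P1 = P2"
proof -
  define nu where "nu = (\<Sum>i<p. n i)"
  define R where "R = P1 - P2"
  have d1: "degree P1 = nu" "coeff P1 nu = 1" and d2: "degree P2 = nu" "coeff P2 nu = 1"
    using P1 P2 by (auto simp: is_kravchuk_II_def nu_def)
  have cR: "coeff R i = 0" if "i \<ge> nu" for i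
  proof (cases "i = nu")
    case True then show ?thesis using d1 d2 by (simp add: R_def)
  next
    case False then show ?thesis using d1 d2 that by (simp add: R_def coeff_eq_0)
  qed
  have zero: "poly R (real k) = 0" if k: "k \<le> N" for k
  proof (cases "nu = 0")
    case True
    then have "R = 0" using cR by (intro poly_eqI) simp
    then show ?thesis by simp
  next
    case False
    have degR: "degree R \<le> nu - 1" by (rule degree_le) (use cR in auto)
    define G where "G = GR N R"
    define a where "a i = pr i / (1 - pr i)" for i
    have apos: "a i > 0" if "i < p" for i using pr that by (auto simp: a_def)
    have ainj: "inj_on a {..<p}"
    proof (rule inj_onI)
      fix i j assume ij: "i \<in> {..<p}" "j \<in> {..<p}" "a i = a j"
      have h: "1 - pr i \<noteq> 0" "1 - pr j \<noteq> 0" using pr ij by auto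
      from ij(3) have "pr i * (1 - pr j) = pr j * (1 - pr i)"
        using h by (simp add: a_def frac_eq_eq)
      then have "pr i = pr j" by (simp add: algebra_simps)
      then show "i = j" using inj ij by (auto dest: inj_onD)
    qed
    have dvdi: "[:-a i,1:]^(n i) dvd G" if i: "i < p" for i
    proof (rule theta_converse)
      show "a i \<noteq> 0" using apos[OF i] by simp
      fix j assume j: "j < n i"
      have "(\<Sum>k=0..N. real k ^ j * poly R (real k) * kravchuk_weight N (pr i) k) = 0"
        using P1 P2 i j unfolding R_def is_kravchuk_II_def
        by (simp add: algebra_simps sum_subtractf)
      then have "(1 - pr i)^N * poly ((theta ^^ j) G) (a i) = 0"
        using ortho_eq[where q="pr i" and N=N and j=j and R=R] pr i by (simp add: G_def a_def)
      then show "poly ((theta ^^ j) G) (a i) = 0" using pr i by auto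
    qed
    have dvdb: "[:-(-1),1:]^(N - (nu - 1)) dvd G"
      using GR_binom_dvd[OF degR] nN False by (simp add: G_def nu_def)
    have "G = 0"
    proof (rule ccontr)
      assume G0: "G \<noteq> 0"
      have "(\<Prod>i<p. [:-a i,1:]^(n i)) * [:-(-1),1:]^(N - (nu - 1)) dvd G"
        by (rule prod_roots_dvd[OF ainj _ dvdi dvdb G0]) (use apos in force)+
      then have "degree ((\<Prod>i<p. [:-a i,1:]^(n i)) * [:-(-1),1:]^(N - (nu - 1))) \<le> degree G"
        using G0 by (rule dvd_imp_degree_le)
      moreover have "degree ((\<Prod>i<p. [:-a i,1:]^(n i)) * [:-(-1),1:]^(N - (nu - 1))) = nu + (N - (nu - 1))"
        by (simp add: degree_mult_eq degree_prod_eq_sum_degree degree_linear_power nu_def)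
      moreover have "nu + (N - (nu - 1)) = N + 1" using nN False unfolding nu_def by linarith
      moreover have "degree G \<le> N" using degree_GR[of 0 N R] by (simp add: G_def)
      ultimately show False by simp
    qed
    then have "coeff G k = 0" by simp
    then show ?thesis using k by (simp add: G_def coeff_GR)
  qed
  show ?thesis
  proof (rule poly_eqI_degree[of "real ` {0..N}"])
    fix z assume "z \<in> real ` {0..N}"
    then obtain k where "k \<le> N" "z = real k" by auto
    then show "poly P1 z = poly P2 z" using zero[of k] by (simp add: R_def)
  next
    have "card (real ` {0..N}) = N + 1" by (simp add: card_image)
    then show "degree P1 < card (real ` {0..N})" "degree P2 < card (real ` {0..N})"
      using d1 d2 nN by (auto simp: nu_def)
  qed
qed



definition kfpoly :: "nat \<Rightarrow> real poly" where "kfpoly m = (\<Prod>i<m. [:-real i, 1:])"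
definition kgpoly :: "nat \<Rightarrow> nat \<Rightarrow> real poly" where "kgpoly N r = (\<Prod>i<r. [:real N - real i, -1:])"

lemma degree_fpoly: "degree (kfpoly m) = m"
  by (simp add: kfpoly_def degree_prod_eq_sum_degree)
lemma lead_fpoly: "lead_coeff (kfpoly m) = 1"
  by (simp add: kfpoly_def lead_coeff_prod)
lemma degree_gpoly: "degree (kgpoly N r) = r"
  by (simp add: kgpoly_def degree_prod_eq_sum_degree)
lemma lead_gpoly: "lead_coeff (kgpoly N r) = (-1)^r"
  by (simp add: kgpoly_def lead_coeff_prod)

lemma ff_fact: "m \<le> k \<Longrightarrow> (\<Prod>i<m. real k - real i) * fact (k - m) = fact k"
proof (induction m)
  case 0 then show ?case by simp
next
  case (Suc m)
  then have "k - m = Suc (k - Suc m)" by simp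
  then have "fact (k - m) = real (k - m) * (fact (k - Suc m) :: real)" by (simp add: fact_Suc)
  have "(\<Prod>i<Suc m. real k - real i) * fact (k - Suc m)
        = (\<Prod>i<m. real k - real i) * ((real k - real m) * fact (k - Suc m))" by simp
  also have "(real k - real m) * fact (k - Suc m) = fact (k - m)"
    using \<open>fact (k - m) = _\<close> Suc.prems by (simp add: of_nat_diff)
  finally show ?case using Suc by simp
qed

lemma ff_zero: "k < m \<Longrightarrow> (\<Prod>i<m. real k - real i) = 0"
  by (rule prod_zero) (auto intro: bexI[of _ k])

lemma poly_fpoly: "poly (kfpoly m) (real k) = (\<Prod>i<m. real k - real i)"
  by (simp add: kfpoly_def poly_prod)

lemma poly_gpoly: "k \<le> N \<Longrightarrow> poly (kgpoly N r) (real k) = (\<Prod>i<r. real (N - k) - real i)"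
  by (simp add: kgpoly_def poly_prod of_nat_diff algebra_simps)

lemma key_identity:
  assumes "k \<le> N" "m \<le> k" "m \<le> nu" "nu \<le> N"
  shows "fact k * fact (N-k) / fact (N - nu) * real ((N - nu) choose (k-m))
       = (\<Prod>i<m. real k - real i) * (\<Prod>i<nu - m. real (N - k) - real i)"
proof (cases "k - m \<le> N - nu")
  case True
  define M where "M = N - nu"
  have h1: "nu - m \<le> N - k" using True assms by linarith
  have h2: "N - k - (nu - m) = M - (k - m)" using True assms by (simp add: M_def)
  have A: "(\<Prod>i<m. real k - real i) = fact k / fact (k - m)"
    using ff_fact[OF assms(2)] by (simp add: field_simps)
  have B: "(\<Prod>i<nu - m. real (N - k) - real i) = fact (N-k) / fact (M - (k - m))"
    using ff_fact[OF h1] h2 by (simp add: field_simps)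
  have C: "real (M choose (k-m)) = fact M / (fact (k-m) * fact (M - (k-m)))"
    using True by (simp add: binomial_fact M_def)
  show ?thesis unfolding A B M_def[symmetric] C by (simp add: field_simps)
next
  case False
  then have "N - k < nu - m" using assms by linarith
  then show ?thesis using False by (simp add: ff_zero binomial_eq_0)
qed

lemma neg1_pow: "m \<le> nu \<Longrightarrow> (-1::real)^(nu-m) = (-1)^nu * (-1)^m"
proof -
  assume "m \<le> nu"
  then obtain d where d: "nu = m + d" using le_Suc_ex by blast
  have "(-1::real)^m * (-1)^m = 1" by (simp flip: power_add)
  then show ?thesis unfolding d by (simp add: power_add algebra_simps)
qed



definition aa :: "(nat \<Rightarrow> real) \<Rightarrow> nat \<Rightarrow> real" where "aa pr i = pr i / (1 - pr i)"
definition EE :: "nat \<Rightarrow> (nat \<Rightarrow> real) \<Rightarrow> (nat \<Rightarrow> nat) \<Rightarrow> real poly" where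
  "EE p pr n = (\<Prod>j<p. [:-aa pr j, 1:]^(n j))"
definition FF :: "nat \<Rightarrow> (nat \<Rightarrow> real) \<Rightarrow> nat \<Rightarrow> (nat \<Rightarrow> nat) \<Rightarrow> real poly" where
  "FF p pr N n = EE p pr n * [:1,1:]^(N - (\<Sum>i<p. n i))"
definition cc :: "nat \<Rightarrow> (nat \<Rightarrow> real) \<Rightarrow> (nat \<Rightarrow> nat) \<Rightarrow> real" where
  "cc p pr n = (\<Prod>j<p. (1 - pr j)^(n j))"
definition PP :: "nat \<Rightarrow> (nat \<Rightarrow> real) \<Rightarrow> nat \<Rightarrow> (nat \<Rightarrow> nat) \<Rightarrow> real poly" where
  "PP p pr N n = smult (cc p pr n) (\<Sum>m\<le>(\<Sum>i<p. n i).
      smult (coeff (EE p pr n) m) (kfpoly m * kgpoly N ((\<Sum>i<p. n i) - m)))"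

lemma degree_EE: "degree (EE p pr n) = (\<Sum>i<p. n i)"
  by (simp add: EE_def degree_prod_eq_sum_degree degree_linear_power)

lemma EE_nz: "EE p pr n \<noteq> 0"
  by (simp add: EE_def)

lemma degree_FF: "(\<Sum>i<p. n i) \<le> N \<Longrightarrow> degree (FF p pr N n) = N"
  using EE_nz[of p pr n] by (simp add: FF_def degree_mult_eq degree_EE degree_linear_power)

lemma poly_PP:
  assumes "k \<le> N" "(\<Sum>i<p. n i) \<le> N"
  shows "poly (PP p pr N n) (real k) = cc p pr n / fact (N - (\<Sum>i<p. n i)) * fact k * fact (N-k)
           * coeff (FF p pr N n) k"
proof -
  define nu where "nu = (\<Sum>i<p. n i)"
  define e where "e m = coeff (EE p pr n) m" for m
  have nuN: "nu \<le> N" using assms by (simp add: nu_def)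
  have e0: "e m = 0" if "m > nu" for m
    using that by (simp add: e_def coeff_eq_0 degree_EE nu_def)
  have "poly (PP p pr N n) (real k) = cc p pr n *
      (\<Sum>m\<le>nu. e m * ((\<Prod>i<m. real k - real i) * (\<Prod>i<nu - m. real (N - k) - real i)))"
    by (simp add: PP_def poly_sum poly_fpoly poly_gpoly assms nu_def e_def)
  also have "(\<Sum>m\<le>nu. e m * ((\<Prod>i<m. real k - real i) * (\<Prod>i<nu - m. real (N - k) - real i)))
      = (\<Sum>m\<in>{..nu}\<inter>{..k}. e m * ((\<Prod>i<m. real k - real i) * (\<Prod>i<nu - m. real (N - k) - real i)))"
    by (rule sum.mono_neutral_right) (auto simp: ff_zero)
  also have "\<dots> = (\<Sum>m\<in>{..nu}\<inter>{..k}. fact k * fact (N-k) / fact (N - nu) * (e m * real ((N - nu) choose (k-m))))"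
    by (rule sum.cong[OF refl]) (subst key_identity[symmetric], use assms nuN in auto)
  also have "\<dots> = (\<Sum>m\<le>k. fact k * fact (N-k) / fact (N - nu) * (e m * real ((N - nu) choose (k-m))))"
    by (rule sum.mono_neutral_left) (auto simp: e0)
  also have "\<dots> = fact k * fact (N-k) / fact (N - nu) * coeff (FF p pr N n) k"
    by (simp add: FF_def coeff_mult coeff_binom_poly e_def sum_distrib_left nu_def)
  finally show ?thesis by (simp add: nu_def)
qed

lemma degree_PP: "degree (PP p pr N n) \<le> (\<Sum>i<p. n i)"
  unfolding PP_def
  by (intro order.trans[OF degree_smult_le] degree_sum_le order.trans[OF degree_smult_le])
     (auto intro!: order.trans[OF degree_mult_le] simp: degree_fpoly degree_gpoly)

lemma coeff_PP:
  assumes "\<forall>j<p. pr j < 1"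
  shows "coeff (PP p pr N n) (\<Sum>i<p. n i) = 1"
proof -
  define nu where "nu = (\<Sum>i<p. n i)"
  have c1: "coeff (kfpoly m * kgpoly N (nu - m)) nu = (-1)^(nu-m)" if "m \<le> nu" for m
    using coeff_mult_degree_sum[of "kfpoly m" "kgpoly N (nu - m)"] that
    using lead_fpoly[of m] lead_gpoly[of N "nu - m"]
    by (simp add: degree_fpoly degree_gpoly)
  have "coeff (PP p pr N n) nu = cc p pr n * (\<Sum>m\<le>nu. coeff (EE p pr n) m * (-1)^(nu-m))"
    by (simp add: PP_def coeff_sum c1 nu_def[symmetric])
  also have "(\<Sum>m\<le>nu. coeff (EE p pr n) m * (-1)^(nu-m)) = (-1)^nu * poly (EE p pr n) (-1)"
    by (simp add: poly_upto[of _ nu] degree_EE nu_def neg1_pow sum_distrib_left algebra_simps)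
  also have "cc p pr n * ((-1)^nu * poly (EE p pr n) (-1))
      = (\<Prod>j<p. ((1 - pr j) * (-1) * (-1 - aa pr j))^(n j))"
    unfolding cc_def EE_def poly_prod nu_def power_sum power_mult_distrib prod.distrib
    by (simp add: poly_power) (intro disjI2 prod.cong refl, rule arg_cong[where f="\<lambda>z. z ^ _"], linarith)
  also have "\<dots> = 1"
  proof (rule prod.neutral, intro ballI)
    fix j assume "j \<in> {..<p}"
    then have "1 - pr j \<noteq> 0" using assms by auto
    then have "(1 - pr j) * (-1) * (-1 - aa pr j) = 1" by (simp add: aa_def field_simps)
    then show "((1 - pr j) * (-1) * (-1 - aa pr j))^(n j) = 1" by simp
  qed
  finally show ?thesis by (simp add: nu_def)
qed



lemma PP_is:
  assumes pr: "\<forall>i<p. 0 < pr i \<and> pr i < 1" and nN: "(\<Sum>i<p. n i) \<le> N"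
  shows "is_kravchuk_II p pr N n (PP p pr N n)"
proof -
  define nu where "nu = (\<Sum>i<p. n i)"
  have c: "coeff (PP p pr N n) nu = 1" using coeff_PP[of p pr N n] pr by (simp add: nu_def)
  have d: "degree (PP p pr N n) = nu"
    using degree_PP[of p pr N n] le_degree[of "PP p pr N n" nu] c by (simp add: nu_def)
  define C where "C = cc p pr n * fact N / fact (N - nu)"
  have GR: "GR N (PP p pr N n) = smult C (FF p pr N n)"
  proof (rule poly_eqI)
    fix k
    show "coeff (GR N (PP p pr N n)) k = coeff (smult C (FF p pr N n)) k"
    proof (cases "k \<le> N")
      case True
      have "real (N choose k) = fact N / (fact k * fact (N - k))" using True by (simp add: binomial_fact)
      then show ?thesis using True nN
        by (simp add: coeff_GR poly_PP C_def nu_def field_simps)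
    next
      case False
      then have "coeff (FF p pr N n) k = 0" using nN by (simp add: coeff_eq_0 degree_FF)
      then show ?thesis using False by (simp add: coeff_GR)
    qed
  qed
  have ortho: "(\<Sum>k=0..N. real k ^ j * poly (PP p pr N n) (real k) * kravchuk_weight N (pr i) k) = 0"
    if i: "i < p" and j: "j < n i" for i j
  proof -
    define H where "H = (\<Prod>l\<in>{..<p}-{i}. [:-aa pr l, 1:]^(n l)) * [:1,1:]^(N - nu)"
    have "EE p pr n = [:-aa pr i, 1:]^(n i) * (\<Prod>l\<in>{..<p}-{i}. [:-aa pr l, 1:]^(n l))"
      unfolding EE_def using i by (subst prod.remove[of _ i]) auto
    then have FF: "FF p pr N n = [:-aa pr i, 1:]^(n i) * H"
      by (simp add: FF_def H_def nu_def mult.assoc)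
    have "(\<Sum>k=0..N. real k ^ j * poly (PP p pr N n) (real k) * kravchuk_weight N (pr i) k)
        = (1 - pr i)^N * poly ((theta ^^ j) (GR N (PP p pr N n))) (pr i / (1 - pr i))"
      using pr i by (intro ortho_eq) auto
    also have "\<dots> = 0"
      unfolding GR theta_smult FF using theta_pow_vanish[OF j, of "aa pr i" H]
      by (simp add: aa_def)
    finally show ?thesis .
  qed
  show ?thesis unfolding is_kravchuk_II_def using c d ortho by (simp add: nu_def)
qed

lemma kravchuk_II_eq:
  assumes "\<forall>i<p. 0 < pr i \<and> pr i < 1" "inj_on pr {..<p}" "(\<Sum>i<p. n i) \<le> N"
  shows "kravchuk_II p pr N n = PP p pr N n"
  unfolding kravchuk_II_def
proof (rule the_equality)
  show "is_kravchuk_II p pr N n (PP p pr N n)" using PP_is assms(1,3) by blast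
  fix P assume "is_kravchuk_II p pr N n P"
  then show "P = PP p pr N n" using kr_unique[OF assms(1,2,3)] PP_is assms(1,3) by blast
qed

lemma mp_mult: "map_poly (of_real :: real \<Rightarrow> complex) (p * q) = map_poly of_real p * map_poly of_real q"
  by (rule poly_eqI) (simp add: coeff_map_poly coeff_mult of_real_sum)

lemma mp_power: "map_poly (of_real :: real \<Rightarrow> complex) (p ^ m) = map_poly of_real p ^ m"
  by (induction m) (simp_all add: mp_mult)

lemma mp_prod: "map_poly (of_real :: real \<Rightarrow> complex) (\<Prod>i\<in>A. f i) = (\<Prod>i\<in>A. map_poly of_real (f i))"
  by (induction A rule: infinite_finite_induct) (simp_all add: mp_mult)

lemma poly_FFc:
  "poly (map_poly (of_real :: real \<Rightarrow> complex) (FF p pr N n)) s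
     = (\<Prod>j<p. (s - complex_of_real (pr j / (1 - pr j))) ^ n j) * (1 + s) ^ (N - (\<Sum>i<p. n i))"
  by (simp add: FF_def EE_def mp_mult mp_power mp_prod map_poly_pCons poly_prod poly_power aa_def)



theorem mainTheorem15:
  fixes p N :: nat and pr :: "nat \<Rightarrow> real" and n :: "nat \<Rightarrow> nat"
    and g :: "real \<Rightarrow> complex" and x :: nat
  assumes "\<forall>i<p. 0 < pr i \<and> pr i < 1"
    and "inj_on pr {..<p}"
    and "(\<Sum>i<p. n i) \<le> N"
    and "valid_path g" and "simple_path g" and "pathfinish g = pathstart g"
    and "0 \<notin> path_image g" and "winding_number g 0 = 1"
    and "x \<le> N"
  shows "complex_of_real (poly (kravchuk_II p pr N n) (real x)) =
    complex_of_real ((\<Prod>j<p. (1 - pr j) ^ n j) / fact (N - (\<Sum>i<p. n i)))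
    * Gamma (of_nat x + 1) * Gamma (of_nat (N - x) + 1)
    * (contour_integral g (\<lambda>s. (1 + s) ^ (N - (\<Sum>i<p. n i)) / s ^ (x + 1)
          * (\<Prod>j<p. (s - complex_of_real (pr j / (1 - pr j))) ^ n j))
       / (2 * complex_of_real pi * \<i>))"
proof -
  define M where "M = N - (\<Sum>i<p. n i)"
  define Fc where "Fc = map_poly (of_real :: real \<Rightarrow> complex) (FF p pr N n)"
  have int: "contour_integral g (\<lambda>s. (1 + s) ^ M / s ^ (x + 1)
          * (\<Prod>j<p. (s - complex_of_real (pr j / (1 - pr j))) ^ n j))
        = contour_integral g (\<lambda>s. poly Fc s / s ^ (x + 1))"
    by (rule arg_cong[where f="contour_integral g"]) (auto simp: Fc_def poly_FFc M_def)
  also have "\<dots> = 2*pi*\<i>*winding_number g 0 * coeff Fc x"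
    by (rule contour_poly) (use assms in auto)
  also have "\<dots> = 2*pi*\<i> * of_real (coeff (FF p pr N n) x)"
    using assms by (simp add: Fc_def coeff_map_poly)
  finally have I: "contour_integral g (\<lambda>s. (1 + s) ^ M / s ^ (x + 1)
          * (\<Prod>j<p. (s - complex_of_real (pr j / (1 - pr j))) ^ n j))
        = 2*pi*\<i> * of_real (coeff (FF p pr N n) x)" .
  have G1: "Gamma (of_nat x + 1) = (fact x :: complex)" using Gamma_fact[of x] by (simp add: add.commute)
  have G2: "Gamma (of_nat (N - x) + 1) = (fact (N - x) :: complex)"
    using Gamma_fact[of "N - x"] by (simp add: add.commute)
  have P: "poly (kravchuk_II p pr N n) (real x)
      = cc p pr n / fact M * fact x * fact (N-x) * coeff (FF p pr N n) x"
    using kravchuk_II_eq[OF assms(1-3)] poly_PP[OF assms(9) assms(3)] by (simp add: M_def)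
  show ?thesis
    unfolding M_def[symmetric] I G1 G2 P
    by (simp add: cc_def field_simps)
qed

end
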